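(* Assume Conditions A, B, C with $k_1=0$ (so $H(q,X)=H(X)$), let $0<T<\infty$, let $\chi:(0,T)\to\mathbb{R}$ be bounded continuous with $\alpha=\sup_{(0,T)}|\chi|$, and let $Z$ be a non-increasing continuous function from (a set containing) $[0,\infty)$ to $[0,\infty)$. Set $M=\max(\Lambda^{\sup},1)$ and $\bar E=2(1+T)M$. Fix $z\in\mathbb{R}^n$, $r=|x-z|$. Then for every $b>0$ the function $w(x,t)=\alpha t+b(1+t)e^{r^2/\bar E}$ is a (classical, hence viscosity) super-solution of $H(D^2w+Z(w)Dw\otimes Dw)+\chi(t)-w_t\le0$ in $\mathbb{R}^n\times(0,T)$.
   Context: $S^{n\times n}$ denotes the real symmetric matrices with the usual order, $I$ the identity, $O$ the zero matrix, $(e\otimes e)_{ij}=e_ie_j$, $(p\otimes q)_{ij}=p_iq_j$. $H:\mathbb{R}^n\times S^{n\times n}\to\mathbb{R}$ is continuous and satisfies: Condition A: $H(q,X)\le H(q,Y)$ when $X\le Y$ and $H(q,O)=0$. Condition B: there is $k_1\ge0$ with $H(\theta q,X)=|\theta|^{k_1}H(q,X)$ for all $\theta\in\mathbb{R}$ and $H(q,\theta X)=\theta H(q,X)$ for $\theta>0$. Condition C: $\max_{|e|=1}H(e,-I)<0<\min_{|e|=1}H(e,I)$ and $\Lambda^{\sup}:=\sup_{\lambda\in\mathbb{R}}\max_{|e|=1}H(e,\lambda e\otimes e+I)<\infty$. *)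

theory Defs
  imports "HOL-Analysis.Analysis"
begin

definition sym_mat :: "real^'n^'n \<Rightarrow> bool" where
  "sym_mat X \<longleftrightarrow> transpose X = X"

definition mat_le :: "real^'n^'n \<Rightarrow> real^'n^'n \<Rightarrow> bool" where
  "mat_le X Y \<longleftrightarrow> (\<forall>v. 0 \<le> v \<bullet> ((Y - X) *v v))"

definition outer :: "real^'n \<Rightarrow> real^'n \<Rightarrow> real^'n^'n" where
  "outer p q = (\<chi> i j. p $ i * q $ j)"

text \<open>|theta|^k with the convention |theta|^0 = 1 (also for theta = 0).\<close>
definition abs_pow :: "real \<Rightarrow> real \<Rightarrow> real" where
  "abs_pow \<theta> k = (if k = 0 then 1 else \<bar>\<theta>\<bar> powr k)"

definition condA :: "(real^'n \<Rightarrow> real^'n^'n \<Rightarrow> real) \<Rightarrow> bool" where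
  "condA H \<longleftrightarrow>
     (\<forall>q X Y. sym_mat X \<longrightarrow> sym_mat Y \<longrightarrow> mat_le X Y \<longrightarrow> H q X \<le> H q Y) \<and>
     (\<forall>q. H q 0 = 0)"

definition condB :: "real \<Rightarrow> (real^'n \<Rightarrow> real^'n^'n \<Rightarrow> real) \<Rightarrow> bool" where
  "condB k1 H \<longleftrightarrow> 0 \<le> k1 \<and>
     (\<forall>\<theta> q X. sym_mat X \<longrightarrow> H (\<theta> *\<^sub>R q) X = abs_pow \<theta> k1 * H q X) \<and>
     (\<forall>\<theta> q X. sym_mat X \<longrightarrow> \<theta> > 0 \<longrightarrow> H q (\<theta> *\<^sub>R X) = \<theta> * H q X)"

definition Lambda_sup :: "(real^'n \<Rightarrow> real^'n^'n \<Rightarrow> real) \<Rightarrow> real" where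
  "Lambda_sup H = Sup {H e (l *\<^sub>R outer e e + mat 1) | l e. norm e = 1}"

definition condC :: "(real^'n \<Rightarrow> real^'n^'n \<Rightarrow> real) \<Rightarrow> bool" where
  "condC H \<longleftrightarrow>
     (SUP e\<in>sphere 0 1. H e (- mat 1)) < 0 \<and> 0 < (INF e\<in>sphere 0 1. H e (mat 1)) \<and>
     bdd_above {H e (l *\<^sub>R outer e e + mat 1) | l e. norm e = 1}"

definition classical_supersol ::
  "(real^'n \<Rightarrow> real^'n^'n \<Rightarrow> real) \<Rightarrow> (real \<Rightarrow> real) \<Rightarrow> (real \<Rightarrow> real) \<Rightarrow> real
     \<Rightarrow> (real^'n \<Rightarrow> real \<Rightarrow> real) \<Rightarrow> bool" where
  "classical_supersol H Z chi T w \<longleftrightarrow>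
    (\<forall>x t. 0 < t \<and> t < T \<longrightarrow>
      (\<exists>Dx X wt.
        (\<forall>y. ((\<lambda>y'. w y' t) has_derivative (\<lambda>h. Dx y \<bullet> h)) (at y)) \<and>
        (Dx has_derivative (\<lambda>h. X *v h)) (at x) \<and>
        ((\<lambda>s. w x s) has_real_derivative wt) (at t) \<and>
        H (Dx x) (X + Z (w x t) *\<^sub>R outer (Dx x) (Dx x)) + chi t - wt \<le> 0))"

end

theory Submission imports Defs begin

lemma outer_mv: "outer p q *v h = (q \<bullet> h) *\<^sub>R p"
  by (simp add: vec_eq_iff outer_def matrix_vector_mult_def inner_vec_def sum_distrib_left mult.commute mult.left_commute)

lemma smv: "(c *\<^sub>R (A::real^'n^'m)) *v h = c *\<^sub>R (A *v h)"
  by (simp add: vec_eq_iff matrix_vector_mult_def sum_distrib_left mult.assoc)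

lemma sym_lam: "sym_mat (l *\<^sub>R outer e e + mat 1)"
  by (simp add: sym_mat_def vec_eq_iff transpose_def outer_def mat_def mult.commute)

lemma d_exp:
  assumes "E \<noteq> 0"
  shows "((\<lambda>y. exp (norm (y - z)^2 / E)) has_derivative
     (\<lambda>h. (exp (norm (y - z)^2 / E) * (2 / E)) *\<^sub>R (y - z) \<bullet> h)) (at y)"
  unfolding power2_norm_eq_inner
  apply (rule has_derivative_eq_rhs)
   apply (rule derivative_eq_intros refl | simp add: assms)+
  apply (rule ext)
  using assms by (simp add: field_simps inner_commute inner_diff_right inner_diff_left)

lemma d_hess:
  fixes z x :: "real^'n"
  assumes "E \<noteq> 0"
  shows "((\<lambda>y. (k * exp (norm (y - z)^2 / E)) *\<^sub>R (y - z)) has_derivative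
     (\<lambda>h. ((k * exp (norm (x - z)^2 / E)) *\<^sub>R mat 1
        + (k * exp (norm (x - z)^2 / E) * (2/E)) *\<^sub>R outer (x - z) (x - z)) *v h)) (at x)"
  apply (rule has_derivative_eq_rhs)
   apply (rule has_derivative_scaleR[OF has_derivative_mult_right[OF d_exp[OF assms]]])
   apply (rule derivative_eq_intros refl)+
  apply (rule ext)
  apply (simp only: matrix_vector_mult_add_rdistrib smv outer_mv matrix_vector_mul_lid)
  by (simp add: algebra_simps inner_commute inner_diff_right scaleR_diff_right)

lemma outer_scale: "outer (a *\<^sub>R p) (c *\<^sub>R q) = (a * c) *\<^sub>R outer p q"
  by (simp add: vec_eq_iff outer_def)

theorem mainTheorem9:
  fixes H :: "real^'n \<Rightarrow> real^'n^'n \<Rightarrow> real"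
    and chi Z :: "real \<Rightarrow> real" and T b :: real and z :: "real^'n"
  assumes Hcont: "continuous_on (UNIV \<times> {X. sym_mat X}) (\<lambda>(q, X). H q X)"
    and A: "condA H" and B: "condB 0 H" and C: "condC H"
    and T: "0 < T"
    and chi_cont: "continuous_on {0<..<T} chi"
    and chi_bdd: "bounded (chi ` {0<..<T})"
    and Z_cont: "continuous_on {0..} Z"
    and Z_mono: "\<And>s u. 0 \<le> s \<Longrightarrow> s \<le> u \<Longrightarrow> Z u \<le> Z s"
    and Z_nonneg: "\<And>s. 0 \<le> s \<Longrightarrow> 0 \<le> Z s"
    and b: "0 < b"
  shows "let \<alpha> = (SUP t\<in>{0<..<T}. \<bar>chi t\<bar>);
             M = max (Lambda_sup H) 1;
             Ebar = 2 * (1 + T) * M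
         in classical_supersol H Z chi T
              (\<lambda>x t. \<alpha> * t + b * (1 + t) * exp ((norm (x - z))\<^sup>2 / Ebar))"
proof -
  define \<alpha> where "\<alpha> = (SUP t\<in>{0<..<T}. \<bar>chi t\<bar>)"
  define M where "M = max (Lambda_sup H) 1"
  define E where "E = 2 * (1 + T) * M"
  have M1: "M \<ge> 1" unfolding M_def by simp
  have E0: "E > 0" unfolding E_def using M1 T by simp
  have EM: "(2 / E) * M = 1 / (1 + T)"
  proof -
    have "M \<noteq> 0" "1 + T \<noteq> 0" using M1 T by auto
    then have "2 / E * M = 2 / (2 * (1 + T))" unfolding E_def by simp
    also have "\<dots> = 1 / (1 + T)" by (metis mult_divide_mult_cancel_left_if mult.right_neutral zero_neq_numeral)
    finally show ?thesis .
  qed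
  obtain Bd where Bd: "\<And>t. t \<in> {0<..<T} \<Longrightarrow> \<bar>chi t\<bar> \<le> Bd"
    using chi_bdd unfolding bounded_real by (metis image_eqI)
  have chi_le: "chi t \<le> \<alpha>" if "t \<in> {0<..<T}" for t
  proof -
    have "\<bar>chi t\<bar> \<le> \<alpha>" unfolding \<alpha>_def
      by (rule cSUP_upper[OF that]) (use Bd in \<open>auto intro!: bdd_aboveI2[where M=Bd]\<close>)
    then show ?thesis by simp
  qed
  have bddC: "bdd_above {H e (l *\<^sub>R outer e e + mat 1) | l e. norm e = 1}"
    using C unfolding condC_def by simp
  have LS: "H e (l *\<^sub>R outer e e + mat 1) \<le> M" if "norm e = 1" for e l
  proof -
    have "H e (l *\<^sub>R outer e e + mat 1) \<le> Lambda_sup H"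
      unfolding Lambda_sup_def by (rule cSup_upper[OF _ bddC]) (use that in blast)
    then show ?thesis unfolding M_def by simp
  qed
  have Bq: "\<And>\<theta> q X. sym_mat X \<Longrightarrow> H (\<theta> *\<^sub>R q) X = H q X"
    using B unfolding condB_def abs_pow_def by simp
  have BX: "\<And>\<theta> q X. sym_mat X \<Longrightarrow> \<theta> > 0 \<Longrightarrow> H q (\<theta> *\<^sub>R X) = \<theta> * H q X"
    using B unfolding condB_def by simp
  have "classical_supersol H Z chi T
              (\<lambda>x t. \<alpha> * t + b * (1 + t) * exp ((norm (x - z))\<^sup>2 / E))"
    unfolding classical_supersol_def
  proof (intro allI impI)
    fix x :: "real^'n" and t :: real
    assume tT: "0 < t \<and> t < T"
    define k where "k = b * (1 + t) * (2 / E)"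
    define ex where "ex = exp (norm (x - z)^2 / E)"
    define Dx where "Dx = (\<lambda>y. (k * exp (norm (y - z)^2 / E)) *\<^sub>R (y - z))"
    define X where "X = (k * ex) *\<^sub>R mat 1 + (k * ex * (2/E)) *\<^sub>R outer (x - z) (x - z)"
    define wt where "wt = \<alpha> + b * ex"
    let ?w = "\<lambda>x t. \<alpha> * t + b * (1 + t) * exp ((norm (x - z))\<^sup>2 / E)"
    have k0: "k > 0" unfolding k_def using b tT E0 by simp
    have G0: "k * ex > 0" using k0 unfolding ex_def by simp
    have D1: "\<forall>y. ((\<lambda>y'. ?w y' t) has_derivative (\<lambda>h. Dx y \<bullet> h)) (at y)"
    proof
      fix y
      show "((\<lambda>y'. ?w y' t) has_derivative (\<lambda>h. Dx y \<bullet> h)) (at y)"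
        apply (rule has_derivative_eq_rhs)
         apply (rule has_derivative_add[OF has_derivative_const has_derivative_mult_right[OF d_exp[OF E0[THEN less_imp_neq, symmetric]]]])
        apply (rule ext)
        by (simp add: Dx_def k_def algebra_simps)
    qed
    have D2: "(Dx has_derivative (\<lambda>h. X *v h)) (at x)"
      unfolding Dx_def X_def ex_def
      using d_hess[OF E0[THEN less_imp_neq, symmetric], of k z x] by simp
    have D3: "((\<lambda>s. ?w x s) has_real_derivative wt) (at t)"
      unfolding wt_def ex_def
      by (auto intro!: derivative_eq_intros)
    define d where "d = x - z"
    define e :: "real^'n" where "e = (if d = 0 then axis undefined 1 else (1 / norm d) *\<^sub>R d)"
    have ne: "norm e = 1" unfolding e_def by (simp add: norm_axis_1)
    have de: "d = norm d *\<^sub>R e" unfolding e_def by auto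
    have od: "outer d d = (norm d)^2 *\<^sub>R outer e e"
      by (subst (1 2) de, simp add: outer_scale power2_eq_square)
    define lam where "lam = (2 / E + Z (?w x t) * (k * ex)) * (norm d)^2"
    have Y: "X + Z (?w x t) *\<^sub>R outer (Dx x) (Dx x) = (k * ex) *\<^sub>R (lam *\<^sub>R outer e e + mat 1)"
      unfolding X_def Dx_def lam_def ex_def[symmetric] d_def[symmetric] outer_scale od
      by (simp add: algebra_simps power2_eq_square ex_def d_def)
    have Dxe: "Dx x = (k * ex * norm d) *\<^sub>R e"
    proof -
      have "Dx x = (k * ex) *\<^sub>R d" unfolding Dx_def ex_def d_def by simp
      also have "\<dots> = (k * ex * norm d) *\<^sub>R e" by (subst de, simp)
      finally show ?thesis .
    qed
    have symY: "sym_mat ((k * ex) *\<^sub>R (lam *\<^sub>R outer e e + mat 1))"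
      using sym_lam[of lam e] by (simp add: sym_mat_def transpose_def vec_eq_iff)
    have "H (Dx x) (X + Z (?w x t) *\<^sub>R outer (Dx x) (Dx x))
        = H ((k * ex * norm d) *\<^sub>R e) ((k * ex) *\<^sub>R (lam *\<^sub>R outer e e + mat 1))"
      using Y Dxe by simp
    also have "\<dots> = H e ((k * ex) *\<^sub>R (lam *\<^sub>R outer e e + mat 1))"
      by (rule Bq[OF symY])
    also have "\<dots> = (k * ex) * H e (lam *\<^sub>R outer e e + mat 1)"
      by (rule BX[OF sym_lam G0])
    also have "\<dots> \<le> (k * ex) * M"
      using LS[OF ne] G0 by (simp add: mult_left_mono)
    also have "\<dots> = b * ex * (1 + t) * ((2 / E) * M)"
      unfolding k_def by (simp add: algebra_simps add_divide_distrib)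
    also have "\<dots> = b * ex * ((1 + t) / (1 + T))"
      unfolding EM by simp
    also have "\<dots> \<le> b * ex"
    proof -
      have "(1 + t) / (1 + T) \<le> 1" using tT T by simp
      moreover have "b * ex > 0" using b unfolding ex_def by simp
      ultimately show ?thesis using mult_left_le[of "(1 + t) / (1 + T)" "b * ex"] by simp
    qed
    finally have Hle: "H (Dx x) (X + Z (?w x t) *\<^sub>R outer (Dx x) (Dx x)) \<le> b * ex" .
    have "chi t \<le> \<alpha>" using chi_le tT by simp
    then have "H (Dx x) (X + Z (?w x t) *\<^sub>R outer (Dx x) (Dx x)) + chi t - wt \<le> 0"
      using Hle unfolding wt_def by simp
    then show "\<exists>Dx X wt.
        (\<forall>y. ((\<lambda>y'. ?w y' t) has_derivative (\<lambda>h. Dx y \<bullet> h)) (at y)) \<and>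
        (Dx has_derivative (\<lambda>h. X *v h)) (at x) \<and>
        ((\<lambda>s. ?w x s) has_real_derivative wt) (at t) \<and>
        H (Dx x) (X + Z (?w x t) *\<^sub>R outer (Dx x) (Dx x)) + chi t - wt \<le> 0"
      using D1 D2 D3 by blast
  qed
  then show ?thesis unfolding Let_def \<alpha>_def M_def E_def by simp
qed
end
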